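(* Let $K$ and $L$ be positive integers. Consider the $K$-user SISO interference channel with symbol extension factor $L$ and no CSIT, as described in the context. Then the maximum achievable SpAC is $\frac{L-K+1}{L}$.
   Context: Model: $K$ single-antenna transmitters and $K$ single-antenna receivers; transmitter $i$ has a message only for receiver $i$. Over $L$ channel uses, receiver $l$ observes $\mathbf{y}_l=\sum_{i=1}^K\mathbf{H}_{l,i}\mathbf{Q}_i\mathbf{x}_i+\mathbf{n}_l\in\mathbb{C}^{L}$, where $\mathbf{H}_{l,i}\in\mathbb{C}^{L\times L}$ is diagonal with the channel coefficients $h_{l,i}(t)$, $t=1,\dots,L$ (independent across pairs $(l,i)$), $\mathbf{x}_i\in\mathbb{C}^d$ is the finite-alphabet symbol vector of transmitter $i$, $\mathbf{Q}_i\in\mathbb{C}^{L\times d}$ its precoder (rank $d$), and $\mathbf{n}_l$ Gaussian noise. No CSIT: the precoders are fixed and independent of the channel coefficients. A value $d$ is achievable if there exist channel-independent precoders such that, for almost every realization of the channel coefficients, for every receiver $l$: (a) $\sum_{i=1}^K\mathrm{span}(\mathbf{H}_{l,i}\mathbf{Q}_i)=\mathbb{C}^{L}$, and (b) $\mathrm{span}(\mathbf{H}_{l,l}\mathbf{Q}_l)\not\subseteq\sum_{i\ne l}\mathrm{span}(\mathbf{H}_{l,i}\mathbf{Q}_i)$. The SpAC is $d/L$, and the maximum achievable SpAC is the maximum of $d/L$ over achievable $d$. *)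

theory Defs
  imports "HOL-Analysis.Analysis"
begin

text \<open>Users/receivers are indexed by 0..K-1, channel uses by 0..L-1.
  A channel realization is h :: nat \<times> nat \<times> nat \<Rightarrow> complex, h (l,i,t) = h_{l,i}(t),
  i.e. the diagonal entry t of H_{l,i}. A precoder family is
  Q :: nat \<Rightarrow> nat \<Rightarrow> nat \<Rightarrow> complex, Q i t j = entry (t,j) of the L x d matrix Q_i.\<close>

text \<open>Column j of H_{l,i} Q_i combined with coefficients c: the vector
  H_{l,i} Q_i c, evaluated at time t.\<close>
definition HQc :: "nat \<Rightarrow> (nat \<times> nat \<times> nat \<Rightarrow> complex) \<Rightarrow> (nat \<Rightarrow> nat \<Rightarrow> nat \<Rightarrow> complex)
                    \<Rightarrow> nat \<Rightarrow> nat \<Rightarrow> (nat \<Rightarrow> complex) \<Rightarrow> nat \<Rightarrow> complex" where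
  "HQc d h Q l i c t = h (l, i, t) * (\<Sum>j<d. Q i t j * c j)"

definition full_col_rank :: "nat \<Rightarrow> nat \<Rightarrow> (nat \<Rightarrow> nat \<Rightarrow> complex) \<Rightarrow> bool" where
  "full_col_rank L d M \<longleftrightarrow>
     (\<forall>c :: nat \<Rightarrow> complex. (\<forall>t<L. (\<Sum>j<d. M t j * c j) = 0) \<longrightarrow> (\<forall>j<d. c j = 0))"

text \<open>Condition (a): sum_i span(H_{l,i} Q_i) = C^L.\<close>
definition cond_a :: "nat \<Rightarrow> nat \<Rightarrow> nat \<Rightarrow> (nat \<times> nat \<times> nat \<Rightarrow> complex)
                       \<Rightarrow> (nat \<Rightarrow> nat \<Rightarrow> nat \<Rightarrow> complex) \<Rightarrow> nat \<Rightarrow> bool" where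
  "cond_a K L d h Q l \<longleftrightarrow>
     (\<forall>y :: nat \<Rightarrow> complex. \<exists>c :: nat \<Rightarrow> nat \<Rightarrow> complex.
        \<forall>t<L. y t = (\<Sum>i<K. HQc d h Q l i (c i) t))"

text \<open>Condition (b): span(H_{l,l} Q_l) is not contained in sum_{i \<noteq> l} span(H_{l,i} Q_i).\<close>
definition cond_b :: "nat \<Rightarrow> nat \<Rightarrow> nat \<Rightarrow> (nat \<times> nat \<times> nat \<Rightarrow> complex)
                       \<Rightarrow> (nat \<Rightarrow> nat \<Rightarrow> nat \<Rightarrow> complex) \<Rightarrow> nat \<Rightarrow> bool" where
  "cond_b K L d h Q l \<longleftrightarrow>
     (\<exists>c :: nat \<Rightarrow> complex. \<not> (\<exists>c' :: nat \<Rightarrow> nat \<Rightarrow> complex.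
        \<forall>t<L. HQc d h Q l l c t = (\<Sum>i\<in>{..<K} - {l}. HQc d h Q l i (c' i) t)))"

text \<open>Joint law of the channel coefficients: Lebesgue measure on C^(K*K*L)
  (independent coordinates); "almost every realization" is w.r.t. this measure.\<close>
definition chan_measure :: "nat \<Rightarrow> nat \<Rightarrow> (nat \<times> nat \<times> nat \<Rightarrow> complex) measure" where
  "chan_measure K L = PiM ({..<K} \<times> {..<K} \<times> {..<L}) (\<lambda>_. (lborel :: complex measure))"

definition achievable :: "nat \<Rightarrow> nat \<Rightarrow> nat \<Rightarrow> bool" where
  "achievable K L d \<longleftrightarrow>
     (\<exists>Q :: nat \<Rightarrow> nat \<Rightarrow> nat \<Rightarrow> complex.
        (\<forall>i<K. full_col_rank L d (Q i)) \<and>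
        (AE h in chan_measure K L. \<forall>l<K. cond_a K L d h Q l \<and> cond_b K L d h Q l))"

definition SpAC_set :: "nat \<Rightarrow> nat \<Rightarrow> real set" where
  "SpAC_set K L = {real d / real L | d. achievable K L d}"

end

theory Submission
  imports Defs "Jordan_Normal_Form.Determinant"
begin

definition indep :: "('r \<Rightarrow> 'c \<Rightarrow> complex) \<Rightarrow> 'r set \<Rightarrow> 'c set \<Rightarrow> bool" where
  "indep f R C \<longleftrightarrow> (\<forall>w. (\<forall>c\<in>C. (\<Sum>t\<in>R. w t * f t c) = 0) \<longrightarrow> (\<forall>t\<in>R. w t = 0))"

lemma indep_subset:
  assumes "finite R" "indep f R C" "R' \<subseteq> R"
  shows "indep f R' C"
  unfolding indep_def
proof (intro allI impI)
  fix w assume H: "\<forall>c\<in>C. (\<Sum>t\<in>R'. w t * f t c) = 0"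
  define w' where "w' t = (if t \<in> R' then w t else 0)" for t
  have "\<forall>c\<in>C. (\<Sum>t\<in>R. w' t * f t c) = 0"
  proof
    fix c assume "c \<in> C"
    have "(\<Sum>t\<in>R. w' t * f t c) = (\<Sum>t\<in>R'. w' t * f t c)"
      using assms by (intro sum.mono_neutral_right) (auto simp: w'_def)
    also have "\<dots> = (\<Sum>t\<in>R'. w t * f t c)" by (simp add: w'_def)
    finally show "(\<Sum>t\<in>R. w' t * f t c) = 0" using H \<open>c\<in>C\<close> by simp
  qed
  then have "\<forall>t\<in>R. w' t = 0" using assms(2) unfolding indep_def by blast
  then show "\<forall>t\<in>R'. w t = 0"
  proof (intro ballI)
    fix t assume t: "t \<in> R'" and A: "\<forall>t\<in>R. w' t = 0"
    then have "t \<in> R" using assms(3) by blast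
    then have "w' t = 0" using A by blast
    then show "w t = 0" using t by (simp add: w'_def)
  qed
qed

lemma indep_cong:
  assumes "indep f R C" "\<And>t c. t \<in> R \<Longrightarrow> c \<in> C \<Longrightarrow> f t c = g t c"
  shows "indep g R C"
  unfolding indep_def
proof (intro allI impI)
  fix w assume H: "\<forall>c\<in>C. (\<Sum>t\<in>R. w t * g t c) = 0"
  have "\<forall>c\<in>C. (\<Sum>t\<in>R. w t * f t c) = 0"
  proof
    fix c assume c: "c \<in> C"
    have "(\<Sum>t\<in>R. w t * f t c) = (\<Sum>t\<in>R. w t * g t c)"
      using assms(2) c by (intro sum.cong) auto
    then show "(\<Sum>t\<in>R. w t * f t c) = 0" using H c by simp
  qed
  then show "\<forall>t\<in>R. w t = 0" using assms(1) unfolding indep_def by blast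
qed

lemma elim:
  assumes "finite R" "finite C" "indep f R C"
  shows "card R \<le> card C \<and> (\<forall>y. \<exists>x. \<forall>t\<in>R. (\<Sum>c\<in>C. f t c * x c) = y t)"
  using assms
proof (induction R arbitrary: C f rule: finite_induct)
  case empty
  then show ?case by simp
next
  case (insert s R)
  have indR: "indep f R C" using indep_subset[of "insert s R" f C R] insert(1,5) by blast
  have "\<exists>c0\<in>C. f s c0 \<noteq> 0"
  proof (rule ccontr)
    assume nz: "\<not> (\<exists>c0\<in>C. f s c0 \<noteq> 0)"
    define w where "w t = (if t = s then (1::complex) else 0)" for t
    have "\<forall>c\<in>C. (\<Sum>t\<in>insert s R. w t * f t c) = 0"
      using nz insert(1,2) by (auto simp: w_def intro!: sum.neutral)
    then have "w s = 0" using insert(5) unfolding indep_def by blast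
    then show False by (simp add: w_def)
  qed
  then obtain c0 where c0: "c0 \<in> C" "f s c0 \<noteq> 0" by blast
  define lam where "lam t = f t c0 / f s c0" for t
  define f' where "f' t c = f t c - lam t * f s c" for t c
  have f'c0: "f' t c0 = 0" for t using c0 by (simp add: f'_def lam_def)
  have ind': "indep f' R (C - {c0})"
    unfolding indep_def
  proof (intro allI impI)
    fix w assume H: "\<forall>c\<in>C - {c0}. (\<Sum>t\<in>R. w t * f' t c) = 0"
    have H2: "\<forall>c\<in>C. (\<Sum>t\<in>R. w t * f' t c) = 0"
      using H f'c0 by auto
    define w' where "w' t = (if t = s then - (\<Sum>u\<in>R. w u * lam u) else w t)" for t
    have "\<forall>c\<in>C. (\<Sum>t\<in>insert s R. w' t * f t c) = 0"
    proof
      fix c assume "c \<in> C"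
      have "(\<Sum>t\<in>insert s R. w' t * f t c) = w' s * f s c + (\<Sum>t\<in>R. w' t * f t c)"
        using insert(1,2) by simp
      also have "(\<Sum>t\<in>R. w' t * f t c) = (\<Sum>t\<in>R. w t * f t c)"
        using insert(2) by (intro sum.cong) (auto simp: w'_def)
      also have "(\<Sum>t\<in>R. w t * f t c) = (\<Sum>t\<in>R. w t * f' t c) + (\<Sum>t\<in>R. w t * lam t) * f s c"
      proof -
        have "(\<Sum>t\<in>R. w t * f t c) = (\<Sum>t\<in>R. w t * f' t c + (w t * lam t) * f s c)"
          by (intro sum.cong) (auto simp: f'_def algebra_simps)
        then show ?thesis by (simp add: sum.distrib sum_distrib_right)
      qed
      finally show "(\<Sum>t\<in>insert s R. w' t * f t c) = 0"
        using H2 \<open>c\<in>C\<close> by (simp add: w'_def)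
    qed
    then have "\<forall>t\<in>insert s R. w' t = 0" using insert(5) unfolding indep_def by blast
    then show "\<forall>t\<in>R. w t = 0" using insert(2) by (auto simp: w'_def split: if_splits)
  qed
  from insert(3)[OF _ ind'] insert(4)
  have IH: "card R \<le> card (C - {c0})"
    "\<forall>y. \<exists>x. \<forall>t\<in>R. (\<Sum>c\<in>C - {c0}. f' t c * x c) = y t" by auto
  have card: "card (insert s R) \<le> card C"
  proof -
    have "C \<noteq> {}" using c0 by blast
    then have "card C \<ge> 1" using insert(4) by (simp add: Suc_le_eq card_gt_0_iff)
    then show ?thesis using IH(1) insert(1,2,4) c0 by (simp add: card_Diff_singleton)
  qed
  have "\<forall>y. \<exists>x. \<forall>t\<in>insert s R. (\<Sum>c\<in>C. f t c * x c) = y t"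
  proof
    fix y
    obtain x' where x': "\<forall>t\<in>R. (\<Sum>c\<in>C - {c0}. f' t c * x' c) = y t - lam t * y s"
      using spec[OF IH(2), of "\<lambda>t. y t - lam t * y s"] by blast
    define x where "x c = (if c = c0 then (y s - (\<Sum>c\<in>C - {c0}. f s c * x' c)) / f s c0 else x' c)" for c
    have split: "(\<Sum>c\<in>C. g c) = g c0 + (\<Sum>c\<in>C - {c0}. g c)" for g :: "_ \<Rightarrow> complex"
      using insert(4) c0(1) by (rule sum.remove)
    have rs: "(\<Sum>c\<in>C. f s c * x c) = y s"
    proof -
      have "(\<Sum>c\<in>C - {c0}. f s c * x c) = (\<Sum>c\<in>C - {c0}. f s c * x' c)"
        by (intro sum.cong) (auto simp: x_def)
      then show ?thesis using c0(2) by (subst split) (simp add: x_def)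
    qed
    have "(\<Sum>c\<in>C. f t c * x c) = y t" if "t \<in> R" for t
    proof -
      have "(\<Sum>c\<in>C. f t c * x c) = (\<Sum>c\<in>C. f' t c * x c) + lam t * (\<Sum>c\<in>C. f s c * x c)"
      proof -
        have "(\<Sum>c\<in>C. f t c * x c) = (\<Sum>c\<in>C. f' t c * x c + lam t * (f s c * x c))"
          by (intro sum.cong) (auto simp: f'_def algebra_simps)
        then show ?thesis by (simp add: sum.distrib sum_distrib_left)
      qed
      also have "(\<Sum>c\<in>C. f' t c * x c) = (\<Sum>c\<in>C - {c0}. f' t c * x' c)"
        by (subst split) (simp add: f'c0, intro sum.cong, auto simp: x_def)
      finally show ?thesis using x' that rs by simp
    qed
    then show "\<exists>x. \<forall>t\<in>insert s R. (\<Sum>c\<in>C. f t c * x c) = y t" using rs by auto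
  qed
  with card show ?case by blast
qed

lemma replace_row:
  assumes "finite R" "finite U" "k \<in> R" "indep f R C" "\<forall>c\<in>C. f k c = (\<Sum>i\<in>U. g i c)"
  shows "\<exists>i\<in>U. indep (f(k := g i)) R C"
proof (rule ccontr)
  assume "\<not> ?thesis"
  then have "\<forall>i\<in>U. \<exists>w. (\<forall>c\<in>C. (\<Sum>t\<in>R. w t * (f(k := g i)) t c) = 0) \<and> \<not> (\<forall>t\<in>R. w t = 0)"
    unfolding indep_def by blast
  then obtain W where W: "\<And>i. i \<in> U \<Longrightarrow> (\<forall>c\<in>C. (\<Sum>t\<in>R. W i t * (f(k := g i)) t c) = 0) \<and> \<not> (\<forall>t\<in>R. W i t = 0)"
    by metis
  have splitR: "(\<Sum>t\<in>R. h t) = h k + (\<Sum>t\<in>R - {k}. h t)" for h :: "_ \<Rightarrow> complex"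
    using assms(1,3) by (rule sum.remove)
  have eq: "(\<Sum>t\<in>R - {k}. W i t * f t c) = - (W i k * g i c)" if "i \<in> U" "c \<in> C" for i c
  proof -
    have "(\<Sum>t\<in>R - {k}. W i t * (f(k := g i)) t c) = (\<Sum>t\<in>R - {k}. W i t * f t c)"
      by (intro sum.cong) auto
    moreover have "(\<Sum>t\<in>R. W i t * (f(k := g i)) t c) = 0" using W that by blast
    ultimately show ?thesis by (subst (asm) splitR) (simp add: add_eq_0_iff)
  qed
  have Wk: "W i k \<noteq> 0" if "i \<in> U" for i
  proof
    assume z: "W i k = 0"
    have "\<forall>c\<in>C. (\<Sum>t\<in>R. W i t * f t c) = 0"
    proof
      fix c assume c: "c \<in> C"
      show "(\<Sum>t\<in>R. W i t * f t c) = 0"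
        by (subst splitR) (use eq[OF that c] z in simp)
    qed
    then have "\<forall>t\<in>R. W i t = 0" using assms(4) unfolding indep_def by blast
    then show False using W[OF that] by blast
  qed
  define V where "V t = (if t = k then 1 else (\<Sum>i\<in>U. W i t / W i k))" for t
  have "\<forall>c\<in>C. (\<Sum>t\<in>R. V t * f t c) = 0"
  proof
    fix c assume c: "c \<in> C"
    have "(\<Sum>t\<in>R - {k}. V t * f t c) = (\<Sum>t\<in>R - {k}. \<Sum>i\<in>U. (1 / W i k) * (W i t * f t c))"
      by (intro sum.cong) (auto simp: V_def sum_distrib_right)
    also have "\<dots> = (\<Sum>i\<in>U. (1 / W i k) * (\<Sum>t\<in>R - {k}. W i t * f t c))"
      by (subst sum.swap) (simp add: sum_distrib_left)
    also have "\<dots> = (\<Sum>i\<in>U. - g i c)"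
      by (intro sum.cong) (auto simp: eq[OF _ c] Wk)
    finally have "(\<Sum>t\<in>R - {k}. V t * f t c) = - (\<Sum>i\<in>U. g i c)" by (simp add: sum_negf)
    then show "(\<Sum>t\<in>R. V t * f t c) = 0"
      by (subst splitR) (simp add: V_def assms(5) c)
  qed
  then have "V k = 0" using assms(3,4) unfolding indep_def by blast
  then show False by (simp add: V_def)
qed

lemma select_rows:
  assumes "finite R" "finite U" "indep f R C" "\<forall>t\<in>R. \<forall>c\<in>C. f t c = (\<Sum>i\<in>U. g i t c)"
  shows "\<exists>s. (\<forall>t\<in>R. s t \<in> U) \<and> indep (\<lambda>t. g (s t) t) R C"
proof -
  have "S \<subseteq> R \<Longrightarrow> \<exists>s. (\<forall>t\<in>S. s t \<in> U) \<and> indep (\<lambda>t. if t \<in> S then g (s t) t else f t) R C" for S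
  proof (induction S rule: infinite_finite_induct)
    case (infinite S)
    then show ?case using assms(1) finite_subset by blast
  next
    case empty
    then show ?case using assms(3) by simp
  next
    case (insert k S)
    then obtain s where s: "\<forall>t\<in>S. s t \<in> U" "indep (\<lambda>t. if t \<in> S then g (s t) t else f t) R C"
      by blast
    let ?F = "\<lambda>t. if t \<in> S then g (s t) t else f t"
    have "\<forall>c\<in>C. ?F k c = (\<Sum>i\<in>U. g i k c)" using insert(2,4) assms(4) by auto
    from replace_row[OF assms(1,2) _ s(2) this] insert(4)
    obtain i where i: "i \<in> U" "indep (?F(k := g i k)) R C" by blast
    have "?F(k := g i k) = (\<lambda>t. if t \<in> insert k S then g ((s(k := i)) t) t else f t)"
      using insert(2) by (auto simp: fun_eq_iff)
    with i s(1) show ?case by (intro exI[of _ "s(k := i)"]) auto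
  qed
  from this[OF order_refl] obtain s where "\<forall>t\<in>R. s t \<in> U" "indep (\<lambda>t. if t \<in> R then g (s t) t else f t) R C"
    by blast
  then show ?thesis by (intro exI[of _ s]) (auto intro: indep_cong)
qed

lemma ext_basis:
  assumes "finite R0" "T \<subseteq> R0" "indep f T C"
  shows "\<exists>B. T \<subseteq> B \<and> B \<subseteq> R0 \<and> indep f B C \<and> (\<forall>t\<in>R0. \<exists>a. \<forall>c\<in>C. f t c = (\<Sum>s\<in>B. a s * f s c))"
proof -
  let ?P = "\<lambda>B. T \<subseteq> B \<and> B \<subseteq> R0 \<and> indep f B C"
  have "\<forall>B. ?P B \<longrightarrow> card B < Suc (card R0)"
    using assms(1) by (auto simp: less_Suc_eq_le intro: card_mono)
  from ex_has_greatest_nat[of ?P T card, OF _ this] assms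
  obtain B where B: "?P B" "\<And>B'. ?P B' \<Longrightarrow> card B' \<le> card B" by auto
  have finB: "finite B" using B(1) assms(1) finite_subset by blast
  have "\<exists>a. \<forall>c\<in>C. f t c = (\<Sum>s\<in>B. a s * f s c)" if t: "t \<in> R0" for t
  proof (cases "t \<in> B")
    case True
    define a where "a s = (if s = t then 1 else (0::complex))" for s
    have "\<forall>c\<in>C. f t c = (\<Sum>s\<in>B. a s * f s c)"
    proof
      fix c
      have "(\<Sum>s\<in>B. a s * f s c) = (\<Sum>s\<in>B. if t = s then f s c else 0)"
        by (intro sum.cong) (auto simp: a_def)
      then show "f t c = (\<Sum>s\<in>B. a s * f s c)" using True finB by simp
    qed
    then show ?thesis by blast
  next
    case False
    have "\<not> indep f (insert t B) C"
    proof
      assume "indep f (insert t B) C"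
      then have "?P (insert t B)" using B(1) t by auto
      then have "card (insert t B) \<le> card B" using B(2) by blast
      then show False using False finB by simp
    qed
    then obtain w where w: "\<forall>c\<in>C. (\<Sum>s\<in>insert t B. w s * f s c) = 0" "\<not> (\<forall>s\<in>insert t B. w s = 0)"
      unfolding indep_def by blast
    have wt: "w t \<noteq> 0"
    proof
      assume z: "w t = 0"
      have "\<forall>c\<in>C. (\<Sum>s\<in>B. w s * f s c) = 0" using w(1) z False finB by simp
      then have "\<forall>s\<in>B. w s = 0" using B(1) unfolding indep_def by blast
      then show False using w(2) z by blast
    qed
    have "\<forall>c\<in>C. f t c = (\<Sum>s\<in>B. (- w s / w t) * f s c)"
    proof
      fix c assume c: "c \<in> C"
      have "w t * f t c + (\<Sum>s\<in>B. w s * f s c) = 0" using w(1) c False finB by simp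
      then have "f t c = - (\<Sum>s\<in>B. w s * f s c) / w t" using wt by (simp add: field_simps add_eq_0_iff)
      also have "\<dots> = (\<Sum>s\<in>B. (- w s / w t) * f s c)"
        by (simp add: sum_divide_distrib sum_negf)
      finally show "f t c = (\<Sum>s\<in>B. (- w s / w t) * f s c)" .
    qed
    then show ?thesis by (rule exI[where x="\<lambda>s. - w s / w t"])
  qed
  with B(1) show ?thesis by blast
qed

lemma rowrank:
  assumes "finite R0" "finite D" "B \<subseteq> R0" "indep (\<lambda>j t. A t j) D R0"
    "\<forall>t\<in>R0. \<exists>a. \<forall>j\<in>D. A t j = (\<Sum>s\<in>B. a s * A s j)"
  shows "card D \<le> card B"
proof -
  have finB: "finite B" using assms(1,3) finite_subset by blast
  have "indep (\<lambda>j t. A t j) D B"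
    unfolding indep_def
  proof (intro allI impI)
    fix w assume H: "\<forall>t\<in>B. (\<Sum>j\<in>D. w j * A t j) = 0"
    have "\<forall>t\<in>R0. (\<Sum>j\<in>D. w j * A t j) = 0"
    proof
      fix t assume "t \<in> R0"
      then obtain a where a: "\<forall>j\<in>D. A t j = (\<Sum>s\<in>B. a s * A s j)" using assms(5) by blast
      have "(\<Sum>j\<in>D. w j * A t j) = (\<Sum>j\<in>D. \<Sum>s\<in>B. a s * (w j * A s j))"
        by (intro sum.cong) (auto simp: a sum_distrib_left algebra_simps)
      also have "\<dots> = (\<Sum>s\<in>B. a s * (\<Sum>j\<in>D. w j * A s j))"
        by (subst sum.swap) (simp add: sum_distrib_left)
      also have "\<dots> = 0" using H by simp
      finally show "(\<Sum>j\<in>D. w j * A t j) = 0" .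
    qed
    then show "\<forall>j\<in>D. w j = 0" using assms(4) unfolding indep_def by blast
  qed
  then show ?thesis using elim[OF assms(2) finB] by blast
qed

lemma det_ne0_iff_indep:
  fixes g :: "nat \<times> nat \<Rightarrow> complex"
  shows "Determinant.det (mat n n g) \<noteq> 0 \<longleftrightarrow> indep (\<lambda>t s. g (t, s)) {..<n} {..<n}"
proof -
  let ?A = "mat n n g"
  have A: "?A \<in> carrier_mat n n" by simp
  have AT: "transpose_mat ?A \<in> carrier_mat n n" by simp
  have "Determinant.det ?A = Determinant.det (transpose_mat ?A)" using det_transpose[OF A] by simp
  also have "\<dots> = 0 \<longleftrightarrow> (\<exists>v. v \<in> carrier_vec n \<and> v \<noteq> 0\<^sub>v n \<and> transpose_mat ?A *\<^sub>v v = 0\<^sub>v n)"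
    by (rule det_0_iff_vec_prod_zero[OF AT])
  finally have eq: "Determinant.det ?A = 0 \<longleftrightarrow> (\<exists>v. v \<in> carrier_vec n \<and> v \<noteq> 0\<^sub>v n \<and> transpose_mat ?A *\<^sub>v v = 0\<^sub>v n)" .
  have prod: "(transpose_mat ?A *\<^sub>v v) $ s = (\<Sum>t<n. v $ t * g (t, s))" if "v \<in> carrier_vec n" "s < n" for v s
    using that by (simp add: scalar_prod_def lessThan_atLeast0 mult.commute)
  show ?thesis
  proof
    assume d: "Determinant.det ?A \<noteq> 0"
    show "indep (\<lambda>t s. g (t, s)) {..<n} {..<n}"
      unfolding indep_def
    proof (intro allI impI)
      fix w assume H: "\<forall>s\<in>{..<n}. (\<Sum>t\<in>{..<n}. w t * g (t, s)) = 0"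
      let ?v = "vec n w"
      have "transpose_mat ?A *\<^sub>v ?v = 0\<^sub>v n"
        by (rule eq_vecI) (use H prod[of ?v] in auto)
      then have "?v = 0\<^sub>v n" using eq d vec_carrier[of n w] by blast
      then show "\<forall>t\<in>{..<n}. w t = 0"
        by (metis index_vec index_zero_vec(1) lessThan_iff)
    qed
  next
    assume ind: "indep (\<lambda>t s. g (t, s)) {..<n} {..<n}"
    show "Determinant.det ?A \<noteq> 0"
    proof
      assume "Determinant.det ?A = 0"
      then obtain v where v: "v \<in> carrier_vec n" "v \<noteq> 0\<^sub>v n" "transpose_mat ?A *\<^sub>v v = 0\<^sub>v n"
        using eq by blast
      have "\<forall>s\<in>{..<n}. (\<Sum>t\<in>{..<n}. v $ t * g (t, s)) = 0"
      proof
        fix s assume "s \<in> {..<n}"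
        then have "(transpose_mat ?A *\<^sub>v v) $ s = 0" using v(3) by simp
        then show "(\<Sum>t\<in>{..<n}. v $ t * g (t, s)) = 0" using prod[OF v(1)] \<open>s \<in> {..<n}\<close> by simp
      qed
      then have "\<forall>t\<in>{..<n}. v $ t = 0" using ind unfolding indep_def by blast
      then have "v = 0\<^sub>v n" using v(1) by (intro eq_vecI) auto
      then show False using v(2) by simp
    qed
  qed
qed

lemma det_mat_expand:
  "Determinant.det (mat n n g) = (\<Sum>p\<in>{p. p permutes {0..<n}}. signof p * (\<Prod>i = 0..<n. g (i, p i)))"
proof -
  have "Determinant.det (mat n n g) = (\<Sum>p\<in>{p. p permutes {0..<n}}. signof p * (\<Prod>i = 0..<n. mat n n g $$ (i, p i)))"
    by (rule det_def') simp
  also have "\<dots> = (\<Sum>p\<in>{p. p permutes {0..<n}}. signof p * (\<Prod>i = 0..<n. g (i, p i)))"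
  proof (intro sum.cong refl arg_cong2[where f="(*)"] prod.cong)
    fix p i assume "p \<in> {p. p permutes {0..<n}}" "i \<in> {0..<n}"
    then have "p i < n" using permutes_in_image by fastforce
    then show "mat n n g $$ (i, p i) = g (i, p i)" using \<open>i \<in> {0..<n}\<close> by simp
  qed
  finally show ?thesis .
qed

abbreviation Iset :: "nat \<Rightarrow> nat \<Rightarrow> (nat \<times> nat \<times> nat) set" where
  "Iset K L \<equiv> {..<K} \<times> {..<K} \<times> {..<L}"

lemma finite_Iset: "finite (Iset K L)" by simp

lemma psf: "product_sigma_finite (\<lambda>_::nat\<times>nat\<times>nat. (lborel :: complex measure))"
  unfolding product_sigma_finite_def by (simp add: sigma_finite_lborel)

lemma space_chan: "space (chan_measure K L) = (\<Pi>\<^sub>E v\<in>Iset K L. UNIV)"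
  unfolding chan_measure_def by (simp add: space_PiM)

lemma sets_chan_box:
  assumes "\<And>v. v \<in> Iset K L \<Longrightarrow> X v \<in> sets borel"
  shows "(\<Pi>\<^sub>E v\<in>Iset K L. X v) \<in> sets (chan_measure K L)"
  unfolding chan_measure_def by (rule sets_PiM_I_finite) (use assms in auto)

lemma emeasure_chan_box:
  assumes "\<And>v. v \<in> Iset K L \<Longrightarrow> X v \<in> sets borel"
  shows "emeasure (chan_measure K L) (\<Pi>\<^sub>E v\<in>Iset K L. X v) = (\<Prod>v\<in>Iset K L. emeasure lborel (X v))"
  unfolding chan_measure_def
  by (rule product_sigma_finite.emeasure_PiM[OF psf]) (use assms in auto)

lemma open_pos_measure:
  fixes X :: "complex set"
  assumes "open X" "z \<in> X"
  shows "0 < emeasure lborel X"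
proof -
  obtain r where r: "r > 0" "ball z r \<subseteq> X" using assms open_contains_ball by blast
  have "emeasure lborel (ball z r) = ennreal (unit_ball_vol (real DIM(complex)) * r ^ DIM(complex))"
    using r by (intro emeasure_ball) simp
  also have "\<dots> > 0" using r by simp
  finally have "0 < emeasure lborel (ball z r)" .
  also have "\<dots> \<le> emeasure lborel X"
    using r(2) assms(1) by (intro emeasure_mono) auto
  finally show ?thesis .
qed

lemma AE_pos_exists:
  assumes "AE h in M. P h" "S \<in> sets M" "0 < emeasure M S"
  shows "\<exists>h\<in>S. P h"
proof (rule ccontr)
  assume nS: "\<not> (\<exists>h\<in>S. P h)"
  from assms(1) obtain N where N: "{x \<in> space M. \<not> P x} \<subseteq> N" "emeasure M N = 0" "N \<in> sets M"
    by (rule AE_E)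
  have "S \<subseteq> N" using nS N(1) sets.sets_into_space[OF assms(2)] by blast
  then have "emeasure M S \<le> emeasure M N" using N(3) by (intro emeasure_mono)
  then show False using N(2) assms(3) by simp
qed

lemma chan_space_pos: "0 < emeasure (chan_measure K L) (space (chan_measure K L))"
proof -
  have "emeasure (chan_measure K L) (\<Pi>\<^sub>E v\<in>Iset K L. UNIV) = (\<Prod>v\<in>Iset K L. emeasure lborel (UNIV :: complex set))"
    by (rule emeasure_chan_box) simp
  also have "\<dots> = (Orderings.top::ennreal) ^ card (Iset K L)" by simp
  also have "\<dots> > 0" by (simp add: top_power_ennreal)
  finally show ?thesis by (simp add: space_chan)
qed

lemma AE_chan_exists:
  assumes "AE h in chan_measure K L. P h"
  shows "\<exists>h. P h"
  using AE_pos_exists[OF assms sets.top chan_space_pos] by blast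

lemma AE_nonzero:
  assumes "v \<in> Iset K L"
  shows "AE h in chan_measure K L. h v \<noteq> 0"
proof (rule AE_I')
  let ?X = "\<lambda>u. if u = v then {0::complex} else UNIV"
  show "(\<Pi>\<^sub>E u\<in>Iset K L. ?X u) \<in> null_sets (chan_measure K L)"
  proof
    show "(\<Pi>\<^sub>E u\<in>Iset K L. ?X u) \<in> sets (chan_measure K L)"
      by (rule sets_chan_box) auto
    have "emeasure (chan_measure K L) (\<Pi>\<^sub>E u\<in>Iset K L. ?X u) = (\<Prod>u\<in>Iset K L. emeasure lborel (?X u))"
      by (rule emeasure_chan_box) auto
    also have "\<dots> = 0"
      using assms by (intro prod_zero[OF finite_Iset]) (auto intro!: bexI[of _ v])
    finally show "emeasure (chan_measure K L) (\<Pi>\<^sub>E u\<in>Iset K L. ?X u) = 0" .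
  qed
  show "{x \<in> space (chan_measure K L). \<not> x v \<noteq> 0} \<subseteq> (\<Pi>\<^sub>E u\<in>Iset K L. ?X u)"
  proof
    fix x assume "x \<in> {x \<in> space (chan_measure K L). \<not> x v \<noteq> 0}"
    then have x: "x \<in> (\<Pi>\<^sub>E u\<in>Iset K L. UNIV)" "x v = 0" by (auto simp: space_chan)
    show "x \<in> (\<Pi>\<^sub>E u\<in>Iset K L. ?X u)"
    proof (rule PiE_I)
      fix u assume "u \<in> Iset K L" then show "x u \<in> ?X u" using x by auto
    next
      fix u assume "u \<notin> Iset K L" then show "x u = undefined" by (rule PiE_arb[OF x(1)])
    qed
  qed
qed

lemma AE_all_nonzero: "AE h in chan_measure K L. \<forall>v\<in>Iset K L. h v \<noteq> 0"
  by (rule AE_finite_allI[OF finite_Iset]) (rule AE_nonzero)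

lemma indep_span:
  assumes "indep f R C" "finite R"
    "\<forall>c\<in>C. \<exists>a. \<forall>t\<in>R. f t c = (\<Sum>s\<in>C'. a s * f t s)"
  shows "indep f R C'"
  unfolding indep_def
proof (intro allI impI)
  fix w assume H: "\<forall>c\<in>C'. (\<Sum>t\<in>R. w t * f t c) = 0"
  have "\<forall>c\<in>C. (\<Sum>t\<in>R. w t * f t c) = 0"
  proof
    fix c assume "c \<in> C"
    then obtain a where a: "\<forall>t\<in>R. f t c = (\<Sum>s\<in>C'. a s * f t s)" using assms(3) by blast
    have "(\<Sum>t\<in>R. w t * f t c) = (\<Sum>t\<in>R. \<Sum>s\<in>C'. a s * (w t * f t s))"
      by (intro sum.cong) (auto simp: a sum_distrib_left algebra_simps)
    also have "\<dots> = (\<Sum>s\<in>C'. a s * (\<Sum>t\<in>R. w t * f t s))"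
      by (subst sum.swap) (simp add: sum_distrib_left)
    also have "\<dots> = 0" using H by simp
    finally show "(\<Sum>t\<in>R. w t * f t c) = 0" .
  qed
  then show "\<forall>t\<in>R. w t = 0" using assms(1) unfolding indep_def by blast
qed

lemma indep_empty: "indep f {} C" by (simp add: indep_def)

lemma prod_pos_ennreal:
  fixes f :: "'a \<Rightarrow> ennreal"
  assumes "finite A" "\<forall>a\<in>A. 0 < f a"
  shows "0 < (\<Prod>a\<in>A. f a)"
  using assms by (induct rule: finite_induct) (auto simp: ennreal_zero_less_mult_iff)

lemma square_cols:
  fixes A :: "nat \<Rightarrow> nat \<Rightarrow> complex"
  assumes "finite J" "indep A J {..<d}"
  shows "\<exists>C. C \<subseteq> {..<d} \<and> indep A J C \<and> card C = card J"
proof -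
  obtain B where B: "B \<subseteq> {..<d}" "indep (\<lambda>j t. A t j) B J"
      "\<forall>j\<in>{..<d}. \<exists>a. \<forall>t\<in>J. A t j = (\<Sum>s\<in>B. a s * A t s)"
    using ext_basis[of "{..<d}" "{}" "\<lambda>j t. A t j" J] indep_empty by auto
  have finB: "finite B" using B(1) finite_subset by blast
  have iB: "indep A J B" using indep_span[OF assms(2) assms(1) B(3)] .
  have "card J \<le> card B" using elim[OF assms(1) finB iB] by blast
  moreover have "card B \<le> card J" using elim[OF finB assms(1) B(2)] by blast
  ultimately show ?thesis using B(1) iB by (intro exI[of _ B]) auto
qed

lemma key:
  fixes Q :: "nat \<Rightarrow> nat \<Rightarrow> nat \<Rightarrow> complex"
  assumes l: "l < K" and js: "\<forall>t<L. js t < K \<and> js t \<noteq> l"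
    and indJ: "\<forall>i. indep (Q i) {t. t < L \<and> js t = i} {..<d}"
  shows "\<exists>S\<in>sets (chan_measure K L). 0 < emeasure (chan_measure K L) S \<and>
     (\<forall>h\<in>S. \<forall>y. \<exists>c'. \<forall>t<L. y t = (\<Sum>i\<in>{..<K} - {l}. HQc d h Q l i (c' i) t))"
proof -
  define J where "J i = {t. t < L \<and> js t = i}" for i
  define U where "U = {..<K} - {l}"
  have finJ: "finite (J i)" for i unfolding J_def by simp
  have "\<forall>i. \<exists>C. C \<subseteq> {..<d} \<and> indep (Q i) (J i) C \<and> card C = card (J i)"
    using square_cols[OF finJ] indJ unfolding J_def by blast
  then obtain Cf where Cf: "\<And>i. Cf i \<subseteq> {..<d}" "\<And>i. indep (Q i) (J i) (Cf i)" "\<And>i. card (Cf i) = card (J i)"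
    by metis
  have finCf: "finite (Cf i)" for i using Cf(1) finite_subset by blast
  define SS where "SS = Sigma U Cf"
  have finU: "finite U" unfolding U_def by simp
  have UJ: "(\<Union>i\<in>U. J i) = {..<L}" using js unfolding U_def J_def by auto
  have "card SS = (\<Sum>i\<in>U. card (Cf i))" unfolding SS_def using finU finCf by (simp add: card_SigmaI)
  also have "\<dots> = (\<Sum>i\<in>U. card (J i))" using Cf(3) by simp
  also have "\<dots> = card (\<Union>i\<in>U. J i)"
    by (rule card_UN_disjoint[symmetric]) (use finU finJ in \<open>auto simp: J_def\<close>)
  finally have cardSS: "card SS = L" using UJ by simp
  have finSS: "finite SS" unfolding SS_def using finU finCf by simp
  obtain col where col: "bij_betw col {0..<card SS} SS" using ex_bij_betw_nat_finite[OF finSS] by blast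
  then have col: "bij_betw col {..<L} SS" using cardSS by (simp add: atLeast0LessThan)
  have colS: "col s \<in> SS" if "s < L" for s using col that by (auto simp: bij_betw_def)
  define g where "g h = (\<lambda>(t, s). h (l, fst (col s), t) * Q (fst (col s)) t (snd (col s)))" for h :: "nat \<times> nat \<times> nat \<Rightarrow> complex"
  define F where "F h = Determinant.det (mat L L (g h))" for h
  define h1 where "h1 = (\<lambda>v. if v \<in> Iset K L then (if fst v = l \<and> js (snd (snd v)) = fst (snd v) then 1 else 0) else (undefined :: complex))"
  have "indep (\<lambda>t s. g h1 (t, s)) {..<L} {..<L}"
    unfolding indep_def
  proof (intro allI impI ballI)
    fix w t0 assume H: "\<forall>s\<in>{..<L}. (\<Sum>t\<in>{..<L}. w t * g h1 (t, s)) = 0" and t0: "t0 \<in> {..<L}"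
    define i where "i = js t0"
    have iU: "i \<in> U" using js t0 unfolding i_def U_def by auto
    have "\<forall>j\<in>Cf i. (\<Sum>t\<in>J i. w t * Q i t j) = 0"
    proof
      fix j assume j: "j \<in> Cf i"
      then have "(i, j) \<in> SS" using iU unfolding SS_def by auto
      then obtain s where s: "s < L" "col s = (i, j)" using col by (force simp: bij_betw_def)
      have "(\<Sum>t\<in>{..<L}. w t * g h1 (t, s)) = (\<Sum>t\<in>{..<L}. if js t = i then w t * Q i t j else 0)"
        using s iU l by (intro sum.cong) (auto simp: g_def h1_def U_def)
      also have "\<dots> = (\<Sum>t\<in>J i. w t * Q i t j)"
        unfolding J_def by (simp add: sum.inter_filter[symmetric])
      finally show "(\<Sum>t\<in>J i. w t * Q i t j) = 0" using H s by simp
    qed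
    then have "\<forall>t\<in>J i. w t = 0" using Cf(2)[of i] unfolding indep_def by blast
    moreover have "t0 \<in> J i" using t0 unfolding J_def i_def by simp
    ultimately show "w t0 = 0" by blast
  qed
  then have F1: "F h1 \<noteq> 0" unfolding F_def by (simp add: det_ne0_iff_indep)
  have Fexp: "F h = (\<Sum>p\<in>{p. p permutes {0..<L}}. signof p * (\<Prod>i = 0..<L. h (l, fst (col (p i)), i) * Q (fst (col (p i))) i (snd (col (p i)))))" for h
    unfolding F_def det_mat_expand g_def by simp
  have contF: "continuous_on UNIV F"
    unfolding Fexp by (intro continuous_intros continuous_on_product_coordinates)
  have openU0: "open {h. F h \<noteq> (\<lambda>_. 0) h}"
    by (rule open_Collect_neq[OF contF]) (rule continuous_on_const)
  then have opn: "openin (product_topology (\<lambda>i. euclidean) UNIV) {h. F h \<noteq> 0}"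
    unfolding open_fun_def by (rule back_subst) simp
  have hU: "h1 \<in> {h. F h \<noteq> 0}" using F1 by simp
  have ex: "\<exists>X. h1 \<in> (\<Pi>\<^sub>E i\<in>UNIV. X i) \<and> (\<forall>i. openin euclidean (X i)) \<and> finite {i. X i \<noteq> topspace euclidean} \<and> (\<Pi>\<^sub>E i\<in>UNIV. X i) \<subseteq> {h. F h \<noteq> 0}"
    by (rule product_topology_open_contains_basis[OF opn hU])
  then obtain X where X0': "h1 \<in> (\<Pi>\<^sub>E i\<in>UNIV. X i) \<and> (\<forall>i. openin euclidean (X i)) \<and> finite {i. X i \<noteq> topspace euclidean} \<and> (\<Pi>\<^sub>E i\<in>UNIV. X i) \<subseteq> {h. F h \<noteq> 0}"
    by (rule exE)
  have X0: "h1 \<in> (\<Pi>\<^sub>E i\<in>UNIV. X i)" "\<forall>i. openin euclidean (X i)" "(\<Pi>\<^sub>E i\<in>UNIV. X i) \<subseteq> {h. F h \<noteq> 0}"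
    using X0' by auto
  have X2: "open (X i)" for i using X0(2) by (cases i) simp
  note X = X0(1) X2 X0(3)
  define S0 where "S0 = (\<Pi>\<^sub>E v\<in>Iset K L. X v)"
  have S0sets: "S0 \<in> sets (chan_measure K L)"
    unfolding S0_def by (rule sets_chan_box) (rule borel_open[OF X(2)])
  have "emeasure (chan_measure K L) S0 = (\<Prod>v\<in>Iset K L. emeasure lborel (X v))"
    unfolding S0_def by (rule emeasure_chan_box) (rule borel_open[OF X(2)])
  also have "\<dots> > 0"
  proof (rule prod_pos_ennreal[OF finite_Iset], rule ballI)
    fix v
    have "h1 v \<in> X v" using X(1) by (cases v) (simp add: PiE_iff)
    then show "0 < emeasure lborel (X v)" by (rule open_pos_measure[OF X(2)])
  qed
  finally have S0pos: "0 < emeasure (chan_measure K L) S0" .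
  have main: "\<forall>y. \<exists>c'. \<forall>t<L. y t = (\<Sum>i\<in>{..<K} - {l}. HQc d h Q l i (c' i) t)" if hS: "h \<in> S0" for h
  proof
    fix y
    have "h \<in> (\<Pi>\<^sub>E i\<in>UNIV. X i)"
    proof -
      have "h v \<in> X v" for v
      proof (cases "v \<in> Iset K L")
        case True show ?thesis by (rule PiE_mem[OF hS[unfolded S0_def] True])
      next
        case False
        have "h v = undefined" by (rule PiE_arb[OF hS[unfolded S0_def] False])
        moreover have "h1 v = undefined" unfolding h1_def using False by (simp only: if_False)
        moreover have "h1 v \<in> X v" by (rule PiE_mem[OF X(1) UNIV_I])
        ultimately show ?thesis by simp
      qed
      then show ?thesis by (intro PiE_I) auto
    qed
    then have "h \<in> {h. F h \<noteq> 0}" by (rule subsetD[OF X(3)])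
    then have "F h \<noteq> 0" by simp
    then have ind: "indep (\<lambda>t s. g h (t, s)) {..<L} {..<L}" unfolding F_def by (simp add: det_ne0_iff_indep)
    obtain z where z: "\<forall>t\<in>{..<L}. (\<Sum>s\<in>{..<L}. g h (t, s) * z s) = y t"
      using elim[OF finite_lessThan finite_lessThan ind] by blast
    define ci where "ci = the_inv_into {..<L} col"
    define c' where "c' i j = (if (i, j) \<in> SS then z (ci (i, j)) else 0)" for i j
    have cici: "ci (col s) = s" if "s < L" for s
      unfolding ci_def using col that by (simp add: bij_betw_def the_inv_into_f_f)
    have "\<forall>t<L. y t = (\<Sum>i\<in>U. HQc d h Q l i (c' i) t)"
    proof (intro allI impI)
      fix t assume t: "t < L"
      have "(\<Sum>i\<in>U. HQc d h Q l i (c' i) t) = (\<Sum>i\<in>U. \<Sum>j\<in>Cf i. h (l, i, t) * Q i t j * z (ci (i, j)))"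
      proof (rule sum.cong[OF refl])
        fix i assume iU: "i \<in> U"
        have "HQc d h Q l i (c' i) t = (\<Sum>j<d. h (l, i, t) * (Q i t j * c' i j))"
          unfolding HQc_def by (simp add: sum_distrib_left)
        also have "\<dots> = (\<Sum>j\<in>Cf i. h (l, i, t) * (Q i t j * c' i j))"
          by (rule sum.mono_neutral_right) (use Cf(1) iU in \<open>auto simp: c'_def SS_def\<close>)
        also have "\<dots> = (\<Sum>j\<in>Cf i. h (l, i, t) * Q i t j * z (ci (i, j)))"
          by (rule sum.cong) (use iU in \<open>auto simp: c'_def SS_def\<close>)
        finally show "HQc d h Q l i (c' i) t = (\<Sum>j\<in>Cf i. h (l, i, t) * Q i t j * z (ci (i, j)))" .
      qed
      also have "\<dots> = (\<Sum>p\<in>SS. h (l, fst p, t) * Q (fst p) t (snd p) * z (ci p))"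
        unfolding SS_def by (subst sum.Sigma) (use finU finCf in \<open>auto simp: split_beta\<close>)
      also have "\<dots> = (\<Sum>s\<in>{..<L}. h (l, fst (col s), t) * Q (fst (col s)) t (snd (col s)) * z (ci (col s)))"
        by (rule sum.reindex_bij_betw[OF col, symmetric])
      also have "\<dots> = (\<Sum>s\<in>{..<L}. g h (t, s) * z s)"
        by (rule sum.cong) (auto simp: g_def cici)
      also have "\<dots> = y t" using z t by simp
      finally show "y t = (\<Sum>i\<in>U. HQc d h Q l i (c' i) t)" by simp
    qed
    then show "\<exists>c'. \<forall>t<L. y t = (\<Sum>i\<in>{..<K} - {l}. HQc d h Q l i (c' i) t)" unfolding U_def by blast
  qed
  have main': "\<forall>h\<in>S0. \<forall>y. \<exists>c'. \<forall>t<L. y t = (\<Sum>i\<in>{..<K} - {l}. HQc d h Q l i (c' i) t)"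
    using main by (intro ballI)
  show ?thesis
    by (intro bexI[of _ S0] conjI S0pos main' S0sets)
qed

lemma upper:
  assumes ach: "achievable K L d" and K1: "K \<ge> 1" and L1: "L \<ge> 1"
  shows "d \<ge> 1 \<and> d + K \<le> L + 1"
proof -
  obtain Q where fr: "\<forall>i<K. full_col_rank L d (Q i)"
    and AEc: "AE h in chan_measure K L. \<forall>l<K. cond_a K L d h Q l \<and> cond_b K L d h Q l"
    using ach unfolding achievable_def by blast
  have "AE h in chan_measure K L. (\<forall>l<K. cond_a K L d h Q l \<and> cond_b K L d h Q l) \<and> (\<forall>v\<in>Iset K L. h v \<noteq> 0)"
    using AEc AE_all_nonzero by (rule AE_conjI)
  then obtain h0 where h0: "\<forall>l<K. cond_a K L d h0 Q l \<and> cond_b K L d h0 Q l" "\<forall>v\<in>Iset K L. h0 v \<noteq> 0"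
    using AE_chan_exists by blast
  have d1: "d \<ge> 1"
  proof (rule ccontr)
    assume "\<not> d \<ge> 1"
    then have d0: "d = 0" by simp
    have "cond_b K L d h0 Q 0" using h0(1) K1 by simp
    then obtain c where "\<not> (\<exists>c'. \<forall>t<L. HQc d h0 Q 0 0 c t = (\<Sum>i\<in>{..<K} - {0}. HQc d h0 Q 0 i (c' i) t))"
      unfolding cond_b_def by blast
    moreover have "\<exists>c'. \<forall>t<L. HQc d h0 Q 0 0 c t = (\<Sum>i\<in>{..<K} - {0}. HQc d h0 Q 0 i (c' i) t)"
      by (rule exI[of _ "\<lambda>_ _. 0"]) (use d0 in \<open>simp add: HQc_def\<close>)
    ultimately show False by (rule notE)
  qed
  define C where "C = {..<K} \<times> {..<d}"
  define f where "f t = (\<lambda>(i, j). h0 (0, i, t) * Q i t j)" for t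
  have finC: "finite C" unfolding C_def by simp
  have indf: "indep f {..<L} C"
    unfolding indep_def
  proof (intro allI impI ballI)
    fix w t0 assume H: "\<forall>c\<in>C. (\<Sum>t\<in>{..<L}. w t * f t c) = 0" and t0: "t0 \<in> {..<L}"
    have "cond_a K L d h0 Q 0" using h0(1) K1 by simp
    then obtain c where c: "\<forall>t<L. (if t = t0 then 1 else 0) = (\<Sum>i<K. HQc d h0 Q 0 i (c i) t)"
      unfolding cond_a_def by (elim allE[of _ "\<lambda>t. if t = t0 then 1 else 0"] exE)
    have rowsum: "(\<Sum>i<K. HQc d h0 Q 0 i (c i) t) = (\<Sum>p\<in>C. f t p * c (fst p) (snd p))" for t
    proof -
      have "(\<Sum>i<K. HQc d h0 Q 0 i (c i) t) = (\<Sum>i<K. \<Sum>j<d. f t (i, j) * c i j)"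
        unfolding HQc_def f_def by (simp add: sum_distrib_left mult.assoc)
      also have "\<dots> = (\<Sum>p\<in>C. f t p * c (fst p) (snd p))"
        unfolding C_def by (subst sum.Sigma) (auto simp: split_beta)
      finally show ?thesis .
    qed
    have "w t0 = (\<Sum>t\<in>{..<L}. w t * (if t = t0 then 1 else 0))"
      using t0 by (simp add: if_distrib cong: if_cong)
    also have "\<dots> = (\<Sum>t\<in>{..<L}. w t * (\<Sum>p\<in>C. f t p * c (fst p) (snd p)))"
      by (intro sum.cong refl) (use c rowsum in auto)
    also have "\<dots> = (\<Sum>t\<in>{..<L}. \<Sum>p\<in>C. c (fst p) (snd p) * (w t * f t p))"
      by (simp add: sum_distrib_left algebra_simps)
    also have "\<dots> = (\<Sum>p\<in>C. \<Sum>t\<in>{..<L}. c (fst p) (snd p) * (w t * f t p))"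
      by (rule sum.swap)
    also have "\<dots> = (\<Sum>p\<in>C. c (fst p) (snd p) * (\<Sum>t\<in>{..<L}. w t * f t p))"
      by (simp add: sum_distrib_left)
    also have "\<dots> = 0" using H by simp
    finally show "w t0 = 0" .
  qed
  define g where "g i t = (\<lambda>(i', j). if i' = i then f t (i', j) else 0)" for i t
  have fg: "\<forall>t\<in>{..<L}. \<forall>p\<in>C. f t p = (\<Sum>i\<in>{..<K}. g i t p)"
  proof (intro ballI)
    fix t p assume "p \<in> C"
    then obtain i' j where p: "p = (i', j)" "i' < K" unfolding C_def by auto
    have "(\<Sum>i\<in>{..<K}. g i t p) = (\<Sum>i\<in>{..<K}. if i' = i then f t (i', j) else 0)"
      unfolding g_def p by simp
    also have "\<dots> = f t p" using p by simp
    finally show "f t p = (\<Sum>i\<in>{..<K}. g i t p)" by simp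
  qed
  obtain sel where sel: "\<forall>t\<in>{..<L}. sel t \<in> {..<K}" "indep (\<lambda>t. g (sel t) t) {..<L} C"
    using select_rows[OF finite_lessThan finite_lessThan indf fg] by blast
  define T where "T i = {t. t < L \<and> sel t = i}" for i
  have indT: "indep (Q i) (T i) {..<d}" if iK: "i < K" for i
    unfolding indep_def
  proof (intro allI impI ballI)
    fix w t0 assume H: "\<forall>j\<in>{..<d}. (\<Sum>t\<in>T i. w t * Q i t j) = 0" and t0: "t0 \<in> T i"
    define w' where "w' t = (if t \<in> T i then w t / h0 (0, i, t) else 0)" for t
    have nz: "h0 (0, i, t) \<noteq> 0" if "t < L" for t using h0(2) K1 iK that by auto
    have "\<forall>p\<in>C. (\<Sum>t\<in>{..<L}. w' t * g (sel t) t p) = 0"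
    proof
      fix p assume "p \<in> C"
      then obtain i' j where p: "p = (i', j)" "j < d" unfolding C_def by auto
      have "(\<Sum>t\<in>{..<L}. w' t * g (sel t) t p) = (\<Sum>t\<in>{..<L}. if t \<in> T i \<and> i' = i then w t * Q i t j else 0)"
        using nz by (intro sum.cong refl) (auto simp: w'_def g_def f_def p T_def)
      also have "\<dots> = (if i' = i then (\<Sum>t\<in>T i. w t * Q i t j) else 0)"
        by (cases "i' = i") (auto simp: sum.inter_filter[symmetric] T_def intro!: sum.cong)
      also have "\<dots> = 0" using H p by simp
      finally show "(\<Sum>t\<in>{..<L}. w' t * g (sel t) t p) = 0" .
    qed
    then have "\<forall>t\<in>{..<L}. w' t = 0" using sel(2) unfolding indep_def by blast
    moreover have "t0 < L" using t0 unfolding T_def by simp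
    ultimately have "w' t0 = 0" by blast
    then show "w t0 = 0" using t0 nz[OF \<open>t0 < L\<close>] by (simp add: w'_def)
  qed
  have "\<forall>i. \<exists>B. i < K \<longrightarrow> T i \<subseteq> B \<and> B \<subseteq> {..<L} \<and> indep (Q i) B {..<d} \<and> d \<le> card B"
  proof
    fix i show "\<exists>B. i < K \<longrightarrow> T i \<subseteq> B \<and> B \<subseteq> {..<L} \<and> indep (Q i) B {..<d} \<and> d \<le> card B"
    proof (cases "i < K")
      case True
      have Tsub: "T i \<subseteq> {..<L}" unfolding T_def by auto
      obtain B where B: "T i \<subseteq> B" "B \<subseteq> {..<L}" "indep (Q i) B {..<d}"
        "\<forall>t\<in>{..<L}. \<exists>a. \<forall>c\<in>{..<d}. Q i t c = (\<Sum>s\<in>B. a s * Q i s c)"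
        using ext_basis[OF finite_lessThan Tsub indT[OF True]] by blast
      have icol: "indep (\<lambda>j t. Q i t j) {..<d} {..<L}"
        using fr True unfolding full_col_rank_def indep_def by (simp add: mult.commute)
      have "card {..<d} \<le> card B"
        by (rule rowrank[OF finite_lessThan finite_lessThan B(2) icol B(4)])
      then show ?thesis using B by auto
    qed simp
  qed
  then obtain Bf where Bf: "\<And>i. i < K \<Longrightarrow> T i \<subseteq> Bf i \<and> Bf i \<subseteq> {..<L} \<and> indep (Q i) (Bf i) {..<d} \<and> d \<le> card (Bf i)"
    by metis
  have priv: "\<exists>e\<in>T l. \<forall>i<K. i \<noteq> l \<longrightarrow> e \<notin> Bf i" if lK: "l < K" for l
  proof (rule ccontr)
    assume "\<not> ?thesis"
    then have cov: "\<forall>e\<in>T l. \<exists>i. i < K \<and> i \<noteq> l \<and> e \<in> Bf i" by blast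
    define js where "js t = (if sel t \<noteq> l then sel t else (SOME i. i < K \<and> i \<noteq> l \<and> t \<in> Bf i))" for t
    have js: "js t < K \<and> js t \<noteq> l \<and> t \<in> Bf (js t)" if t: "t < L" for t
    proof (cases "sel t = l")
      case True
      then have "t \<in> T l" using t unfolding T_def by simp
      then have "\<exists>i. i < K \<and> i \<noteq> l \<and> t \<in> Bf i" using cov by blast
      then have "(SOME i. i < K \<and> i \<noteq> l \<and> t \<in> Bf i) < K \<and> (SOME i. i < K \<and> i \<noteq> l \<and> t \<in> Bf i) \<noteq> l \<and> t \<in> Bf (SOME i. i < K \<and> i \<noteq> l \<and> t \<in> Bf i)"
        by (rule someI_ex)
      then show ?thesis unfolding js_def using True by simp
    next
      case False
      have "sel t < K" using sel(1) t by blast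
      moreover have "t \<in> T (sel t)" using t unfolding T_def by simp
      ultimately show ?thesis using False Bf[of "sel t"] unfolding js_def by auto
    qed
    have indJ: "\<forall>i. indep (Q i) {t. t < L \<and> js t = i} {..<d}"
    proof
      fix i
      show "indep (Q i) {t. t < L \<and> js t = i} {..<d}"
      proof (cases "i < K \<and> i \<noteq> l")
        case True
        have sub: "{t. t < L \<and> js t = i} \<subseteq> Bf i" using js by auto
        have "finite (Bf i)" using Bf[of i] True finite_subset by blast
        then show ?thesis using indep_subset[OF _ _ sub] Bf[of i] True by blast
      next
        case False
        then have E: "{t. t < L \<and> js t = i} = {}" using js by auto
        show ?thesis unfolding E by (rule indep_empty)
      qed
    qed
    obtain S where S: "S \<in> sets (chan_measure K L)" "0 < emeasure (chan_measure K L) S"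
      "\<forall>h\<in>S. \<forall>y. \<exists>c'. \<forall>t<L. y t = (\<Sum>i\<in>{..<K} - {l}. HQc d h Q l i (c' i) t)"
      using key[OF lK _ indJ] js by blast
    obtain h where h: "h \<in> S" "\<forall>l<K. cond_a K L d h Q l \<and> cond_b K L d h Q l"
      using AE_pos_exists[OF AEc S(1,2)] by blast
    then have "cond_b K L d h Q l" using lK by blast
    then obtain c where c: "\<not> (\<exists>c'. \<forall>t<L. HQc d h Q l l c t = (\<Sum>i\<in>{..<K} - {l}. HQc d h Q l i (c' i) t))"
      unfolding cond_b_def by blast
    moreover have "\<exists>c'. \<forall>t<L. HQc d h Q l l c t = (\<Sum>i\<in>{..<K} - {l}. HQc d h Q l i (c' i) t)"
      using S(3) h(1) by (elim ballE allE[of _ "HQc d h Q l l c"]) auto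
    ultimately show False by blast
  qed
  then obtain ef where ef: "\<And>l. l < K \<Longrightarrow> ef l \<in> T l \<and> (\<forall>i<K. i \<noteq> l \<longrightarrow> ef l \<notin> Bf i)"
    by metis
  have injef: "inj_on ef ({..<K} - {0})"
  proof (rule inj_onI)
    fix a b assume "a \<in> {..<K} - {0}" "b \<in> {..<K} - {0}" "ef a = ef b"
    then show "a = b" using ef[of a] ef[of b] unfolding T_def by auto
  qed
  have B0: "Bf 0 \<subseteq> {..<L}" "d \<le> card (Bf 0)" using Bf[of 0] K1 by auto
  have E: "ef ` ({..<K} - {0}) \<subseteq> {..<L}" using ef unfolding T_def by auto
  have disj: "Bf 0 \<inter> ef ` ({..<K} - {0}) = {}" using ef K1 by auto
  have "card (Bf 0) + card (ef ` ({..<K} - {0})) = card (Bf 0 \<union> ef ` ({..<K} - {0}))"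
    using disj finite_subset[OF B0(1) finite_lessThan] finite_subset[OF E finite_lessThan]
    by (intro card_Un_disjoint[symmetric]) auto
  also have "\<dots> \<le> card {..<L}" using B0(1) E by (intro card_mono) auto
  finally have "card (Bf 0) + card (ef ` ({..<K} - {0})) \<le> L" by simp
  moreover have "card (ef ` ({..<K} - {0})) = K - 1" using injef K1 by (simp add: card_image)
  ultimately have "d + K \<le> L + 1" using B0(2) K1 by linarith
  with d1 show ?thesis by blast
qed

definition prec :: "nat \<Rightarrow> nat \<Rightarrow> nat \<Rightarrow> nat \<Rightarrow> complex" where
  "prec K i t j = (if (j = 0 \<and> t = i) \<or> (1 \<le> j \<and> t = K + j - 1) then 1 else 0)"

lemma prec_sum:
  assumes "i < K" "t < L" "K \<le> L"
  shows "(\<Sum>j<L - K + 1. prec K i t j * x j) = (if t < K then (if t = i then x 0 else 0) else x (t - K + 1))"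
proof (cases "t < K")
  case True
  show ?thesis
  proof (cases "t = i")
    case True
    have "(\<Sum>j<L - K + 1. prec K i t j * x j) = (\<Sum>j<L - K + 1. if j = 0 then x j else 0)"
      using \<open>t < K\<close> True by (intro sum.cong) (auto simp: prec_def)
    then show ?thesis using True \<open>t < K\<close> by simp
  next
    case False
    have "(\<Sum>j<L - K + 1. prec K i t j * x j) = (\<Sum>j<L - K + 1. 0)"
      using \<open>t < K\<close> False by (intro sum.cong) (auto simp: prec_def)
    then show ?thesis using False \<open>t < K\<close> by simp
  qed
next
  case False
  have "(\<Sum>j<L - K + 1. prec K i t j * x j) = (\<Sum>j<L - K + 1. if j = t - K + 1 then x j else 0)"
    using False assms by (intro sum.cong) (auto simp: prec_def)
  also have "\<dots> = x (t - K + 1)"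
  proof -
    have "t - K + 1 \<in> {..<L - K + 1}" using False assms by auto
    then show ?thesis by (simp only: sum.delta finite_lessThan if_True)
  qed
  finally show ?thesis using False by simp
qed

lemma lower:
  assumes K1: "K \<ge> 1" and KL: "K \<le> L"
  shows "achievable K L (L - K + 1)"
proof -
  let ?d = "L - K + 1"
  let ?Q = "prec K"
  have fr: "\<forall>i<K. full_col_rank L ?d (?Q i)"
    unfolding full_col_rank_def
  proof (intro allI impI ballI)
    fix i c j assume iK: "i < K" and H: "\<forall>t<L. (\<Sum>j<?d. ?Q i t j * c j) = 0" and j: "j < ?d"
    show "c j = 0"
    proof (cases "j = 0")
      case True
      have "(\<Sum>j<?d. ?Q i i j * c j) = 0" using H iK KL by simp
      then show ?thesis using prec_sum[OF iK _ KL, of i c] iK KL True by simp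
    next
      case False
      define t where "t = K + j - 1"
      have t: "t < L" "\<not> t < K" "t - K + 1 = j" using j False KL unfolding t_def by auto
      have "(\<Sum>j<?d. ?Q i t j * c j) = 0" using H t by simp
      then show ?thesis using prec_sum[OF iK t(1) KL, of c] t by simp
    qed
  qed
  have cond: "\<forall>l<K. cond_a K L ?d h ?Q l \<and> cond_b K L ?d h ?Q l" if nz: "\<forall>v\<in>Iset K L. h v \<noteq> 0" for h
  proof (intro allI impI conjI)
    fix l assume lK: "l < K"
    show "cond_a K L ?d h ?Q l"
      unfolding cond_a_def
    proof
      fix y
      define c where "c i j = (if j = 0 then y i / h (l, i, i) else if i = 0 then y (K + j - 1) / h (l, 0, K + j - 1) else 0)" for i j
      have "\<forall>t<L. y t = (\<Sum>i<K. HQc ?d h ?Q l i (c i) t)"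
      proof (intro allI impI)
        fix t assume t: "t < L"
        have "(\<Sum>i<K. HQc ?d h ?Q l i (c i) t) = (\<Sum>i<K. h (l, i, t) * (if t < K then (if t = i then c i 0 else 0) else c i (t - K + 1)))"
        proof (rule sum.cong[OF refl])
          fix i assume "i \<in> {..<K}"
          then have ps: "(\<Sum>j<L - K + 1. prec K i t j * c i j) = (if t < K then (if t = i then c i 0 else 0) else c i (t - K + 1))"
            using t KL by (intro prec_sum) auto
          show "HQc ?d h ?Q l i (c i) t = h (l, i, t) * (if t < K then (if t = i then c i 0 else 0) else c i (t - K + 1))"
            unfolding HQc_def ps by (rule refl)
        qed
        also have "\<dots> = y t"
        proof (cases "t < K")
          case True
          have "(\<Sum>i<K. h (l, i, t) * (if t < K then (if t = i then c i 0 else 0) else c i (t - K + 1))) = (\<Sum>i<K. if i = t then h (l, i, t) * c i 0 else 0)"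
            using True by (intro sum.cong) auto
          also have "\<dots> = h (l, t, t) * c t 0" using True by simp
          also have "\<dots> = y t" using nz lK True t by (simp add: c_def)
          finally show ?thesis .
        next
          case False
          have "(\<Sum>i<K. h (l, i, t) * (if t < K then (if t = i then c i 0 else 0) else c i (t - K + 1))) = (\<Sum>i<K. if i = 0 then h (l, i, t) * (y t / h (l, 0, t)) else 0)"
            using False by (intro sum.cong) (auto simp: c_def)
          also have "\<dots> = h (l, 0, t) * (y t / h (l, 0, t))" using K1 by simp
          also have "\<dots> = y t" using nz lK K1 t by simp
          finally show ?thesis .
        qed
        finally show "y t = (\<Sum>i<K. HQc ?d h ?Q l i (c i) t)" by simp
      qed
      then show "\<exists>c. \<forall>t<L. y t = (\<Sum>i<K. HQc ?d h ?Q l i (c i) t)" by blast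
    qed
    show "cond_b K L ?d h ?Q l"
      unfolding cond_b_def
    proof (intro exI notI)
      let ?c = "\<lambda>j. if j = 0 then (1::complex) else 0"
      assume "\<exists>c'. \<forall>t<L. HQc ?d h ?Q l l ?c t = (\<Sum>i\<in>{..<K} - {l}. HQc ?d h ?Q l i (c' i) t)"
      then obtain c' where c': "\<forall>t<L. HQc ?d h ?Q l l ?c t = (\<Sum>i\<in>{..<K} - {l}. HQc ?d h ?Q l i (c' i) t)"
        by blast
      have lL: "l < L" using lK KL by simp
      have "HQc ?d h ?Q l l ?c l = h (l, l, l)"
        unfolding HQc_def using prec_sum[OF lK lL KL, of ?c] lK by simp
      moreover have "(\<Sum>i\<in>{..<K} - {l}. HQc ?d h ?Q l i (c' i) l) = 0"
      proof (intro sum.neutral ballI)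
        fix i assume "i \<in> {..<K} - {l}"
        then show "HQc ?d h ?Q l i (c' i) l = 0"
          unfolding HQc_def using prec_sum[OF _ lL KL, of i "c' i"] lK by auto
      qed
      ultimately have "h (l, l, l) = 0" using c' lL by simp
      then show False using nz lK lL by auto
    qed
  qed
  have "AE h in chan_measure K L. \<forall>l<K. cond_a K L ?d h ?Q l \<and> cond_b K L ?d h ?Q l"
    using AE_all_nonzero by (rule eventually_mono) (rule cond)
  then show ?thesis unfolding achievable_def using fr by blast
qed

theorem corollary4:
  fixes K L :: nat
  assumes "K \<ge> 1" and "L \<ge> 1"
  shows "if K \<le> L then (real L - real K + 1) / real L \<in> SpAC_set K L \<and>
              (\<forall>s\<in>SpAC_set K L. s \<le> (real L - real K + 1) / real L)
         else SpAC_set K L = {}"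
proof (cases "K \<le> L")
  case True
  have mem: "(real L - real K + 1) / real L \<in> SpAC_set K L"
  proof -
    have "real (L - K + 1) = real L - real K + 1" using True by (simp add: of_nat_diff)
    then show ?thesis unfolding SpAC_set_def using lower[OF assms(1) True] by force
  qed
  have ub: "\<forall>s\<in>SpAC_set K L. s \<le> (real L - real K + 1) / real L"
  proof
    fix s assume "s \<in> SpAC_set K L"
    then obtain d where d: "s = real d / real L" "achievable K L d" unfolding SpAC_set_def by blast
    have "d + K \<le> L + 1" using upper[OF d(2) assms] by blast
    then have "real d \<le> real L - real K + 1" by linarith
    then show "s \<le> (real L - real K + 1) / real L" using d(1) assms(2)
      by (simp add: divide_right_mono)
  qed
  show ?thesis using True mem ub by simp
next
  case False
  have "SpAC_set K L = {}"
  proof -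
    have "\<not> achievable K L d" for d
    proof
      assume "achievable K L d"
      from upper[OF this assms] have "d \<ge> 1" "d + K \<le> L + 1" by auto
      then show False using False by linarith
    qed
    then show ?thesis unfolding SpAC_set_def by blast
  qed
  then show ?thesis using False by simp
qed

end
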